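(* For any prime $p>3$, $$\sum_{k=1}^{p-1}\frac{\binom{2k}{k}}{k3^k}\equiv\frac{3^{p-1}-1}{p}\pmod p.$$
   Context: Congruences between rational numbers whose denominators are coprime to $p$ are understood in the ring of rationals with denominators prime to $p$ (i.e. $p$-adic integers). *)

theory Defs
  imports Complex_Main "HOL-Computational_Algebra.Primes"
begin

text \<open>Congruence of rationals modulo an integer m, understood in the ring of
rationals whose denominators are coprime to m: x and y are congruent iff
x - y, written in lowest terms a/b, has b coprime to m and m dividing a.\<close>
definition rat_cong :: "rat \<Rightarrow> rat \<Rightarrow> int \<Rightarrow> bool" where
  "rat_cong x y m \<longleftrightarrow>
     (let (a, b) = quotient_of (x - y) in coprime b m \<and> m dvd a)"

end

theory Submission
  imports Defs "HOL-Number_Theory.Number_Theory"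
begin

definition pint :: "int \<Rightarrow> rat \<Rightarrow> bool" where
  "pint P x \<longleftrightarrow> (\<exists>a b. b \<noteq> 0 \<and> coprime b P \<and> x = of_int a / of_int b)"

definition pc :: "int \<Rightarrow> rat \<Rightarrow> rat \<Rightarrow> bool" where
  "pc P x y \<longleftrightarrow> pint P ((x - y) / of_int P)"

lemma pint_frac: "b \<noteq> 0 \<Longrightarrow> coprime b P \<Longrightarrow> pint P (of_int a / of_int b)"
  unfolding pint_def by blast

lemma pint_int: "pint P (of_int a)"
  using pint_frac[of 1 P a] by simp

lemma pint_nat: "pint P (of_nat a)"
  using pint_int[of P "int a"] by simp

lemma pint_add: assumes "pint P x" "pint P y" shows "pint P (x + y)"
proof -
  obtain a b where 1: "b \<noteq> 0" "coprime b P" "x = of_int a / of_int b" using assms(1) pint_def by auto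
  obtain c d where 2: "d \<noteq> 0" "coprime d P" "y = of_int c / of_int d" using assms(2) pint_def by auto
  have "x + y = of_int (a*d + c*b) / of_int (b*d)" using 1 2 by (simp add: field_simps)
  moreover have "b*d \<noteq> 0" "coprime (b*d) P" using 1 2 by auto
  ultimately show ?thesis using pint_frac by metis
qed

lemma pint_mult: assumes "pint P x" "pint P y" shows "pint P (x * y)"
proof -
  obtain a b where 1: "b \<noteq> 0" "coprime b P" "x = of_int a / of_int b" using assms(1) pint_def by auto
  obtain c d where 2: "d \<noteq> 0" "coprime d P" "y = of_int c / of_int d" using assms(2) pint_def by auto
  have "x * y = of_int (a*c) / of_int (b*d)" using 1 2 by (simp add: field_simps)
  moreover have "b*d \<noteq> 0" "coprime (b*d) P" using 1 2 by auto
  ultimately show ?thesis using pint_frac by metis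
qed

lemma pint_uminus: assumes "pint P x" shows "pint P (- x)"
  using pint_mult[OF pint_int[of P "-1"] assms] by simp

lemma pint_diff: assumes "pint P x" "pint P y" shows "pint P (x - y)"
  using pint_add[OF assms(1) pint_uminus[OF assms(2)]] by simp

lemma pint_sum: "(\<And>i. i \<in> A \<Longrightarrow> pint P (f i)) \<Longrightarrow> pint P (sum f A)"
proof (induction A rule: infinite_finite_induct)
  case (infinite A) then show ?case using pint_int[of P 0] by simp
next
  case empty then show ?case using pint_int[of P 0] by simp
next
  case (insert x F) then show ?case by (simp add: pint_add)
qed

lemma pint_pow: "pint P x \<Longrightarrow> pint P (x ^ k)"
  by (induction k) (auto simp: pint_mult pint_int[of P 1, simplified])

lemma pc_refl: "pc P x x"
  unfolding pc_def using pint_int[of P 0] by simp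

lemma pc_sym: "pc P x y \<Longrightarrow> pc P y x"
  unfolding pc_def using pint_uminus by (metis minus_diff_eq minus_divide_left)

lemma pc_trans: "pc P x y \<Longrightarrow> pc P y z \<Longrightarrow> pc P x z"
  unfolding pc_def using pint_add by (metis add_divide_distrib diff_add_cancel add_diff_eq)

lemma pc_add: "pc P x y \<Longrightarrow> pc P u v \<Longrightarrow> pc P (x + u) (y + v)"
  unfolding pc_def using pint_add by (metis add_divide_distrib add_diff_add)

lemma pc_mult: "pint P z \<Longrightarrow> pc P x y \<Longrightarrow> pc P (z * x) (z * y)"
  unfolding pc_def using pint_mult
  by (metis right_diff_distrib times_divide_eq_right)

lemma pc_sum: "(\<And>i. i \<in> A \<Longrightarrow> pc P (f i) (g i)) \<Longrightarrow> pc P (sum f A) (sum g A)"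
  unfolding pc_def
proof -
  assume "\<And>i. i \<in> A \<Longrightarrow> pint P ((f i - g i) / of_int P)"
  then have "pint P (\<Sum>i\<in>A. (f i - g i) / of_int P)" by (rule pint_sum)
  moreover have "(sum f A - sum g A) / of_int P = (\<Sum>i\<in>A. (f i - g i) / of_int P)"
    by (simp add: sum_divide_distrib[symmetric] sum_subtractf)
  ultimately show "pint P ((sum f A - sum g A) / of_int P)" by simp
qed

lemma pc_int: "P dvd (a - b) \<Longrightarrow> pc P (of_int a) (of_int b)"
proof -
  assume "P dvd (a - b)"
  then obtain c where c: "a - b = P * c" by blast
  show ?thesis
  proof (cases "P = 0")
    case True then show ?thesis using pint_int[of P 0] by (simp add: pc_def)
  next
    case False
    have "(of_int a - of_int b) / (of_int P :: rat) = of_int c"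
      using c False by (simp add: field_simps flip: of_int_diff of_int_mult)
    then show ?thesis using pint_int by (simp add: pc_def)
  qed
qed

lemma pc_to_int: assumes "prime P" "pc P (of_int a) (of_int b)" shows "P dvd (a - b)"
proof -
  obtain c d where cd: "d \<noteq> 0" "coprime d P" "(of_int a - of_int b) / of_int P = (of_int c / of_int d :: rat)"
    using assms(2) unfolding pc_def pint_def by blast
  have P0: "P \<noteq> 0" using assms(1) by auto
  have "of_int ((a - b) * d) = (of_int (P * c) :: rat)" using cd P0
    by (simp add: field_simps)
  then have "(a - b) * d = P * c" by (simp only: of_int_eq_iff)
  then have "P dvd (a - b) * d" by simp
  then show ?thesis using cd(2) assms(1)
    by (meson coprime_commute coprime_dvd_mult_left_iff)
qed

lemma pc_rat_cong: assumes "prime P" "pc P x y" shows "rat_cong x y P"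
proof -
  obtain c d where cd: "d \<noteq> 0" "coprime d P" "(x - y) / of_int P = (of_int c / of_int d :: rat)"
    using assms(2) unfolding pc_def pint_def by blast
  have P0: "P \<noteq> 0" using assms(1) by auto
  obtain a' b' where q: "quotient_of (x - y) = (a', b')" by (cases "quotient_of (x - y)")
  have b'0: "b' > 0" using quotient_of_denom_pos[OF q] .
  have cop: "coprime a' b'" using quotient_of_coprime[OF q] .
  have "x - y = of_int a' / of_int b'" using quotient_of_div[OF q] .
  with cd(3) P0 b'0 cd(1) have "of_int (a' * d) = (of_int (P * c * b') :: rat)"
    by (simp add: field_simps)
  then have e: "a' * d = P * c * b'" by (simp only: of_int_eq_iff)
  have "b' dvd a' * d" using e by simp
  then have "b' dvd d" using cop by (meson coprime_commute coprime_dvd_mult_right_iff)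
  then have c1: "coprime b' P" using cd(2) by (meson coprime_common_divisor coprime_def dvd_trans)
  have "P dvd a' * d" using e by simp
  then have c2: "P dvd a'" using cd(2) by (meson coprime_commute coprime_dvd_mult_left_iff)
  show ?thesis unfolding rat_cong_def using q c1 c2 by simp
qed

lemma binom_step: "Suc k * (N choose Suc k) = (N - k) * (N choose k)"
  using times_binomial_minus1_eq[of "Suc k" N] binomial_absorb_comp[of N k] by simp

lemma central_aux:
  fixes n k :: nat
  assumes "k \<le> n"
  shows "int (2*n+1) dvd (-4)^k * fact k * fact k * int (n choose k) - fact (2*k)"
  using assms
proof (induction k)
  case 0 then show ?case by simp
next
  case (Suc k)
  define X where "X = (-4::int)^k * fact k * fact k * int (n choose k)"
  define Y where "Y = (fact (2*k) :: int)"
  have kn: "k < n" using Suc.prems by simp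
  have IH: "int (2*n+1) dvd X - Y" using Suc kn unfolding X_def Y_def by simp
  have b: "int (Suc k) * int (n choose Suc k) = (int n - int k) * int (n choose k)"
    using binom_step[of k n] kn by (metis of_nat_diff of_nat_mult less_imp_le)
  have X1: "(-4::int)^Suc k * fact (Suc k) * fact (Suc k) * int (n choose Suc k)
        = X * ((-4) * (int k + 1) * (int n - int k))"
  proof -
    have "(-4::int)^Suc k * fact (Suc k) * fact (Suc k) * int (n choose Suc k)
       = (-4)^k * (-4) * fact k * fact k * (int k + 1) * (int (Suc k) * int (n choose Suc k))"
      by (simp add: fact_Suc algebra_simps)
    also have "\<dots> = X * ((-4) * (int k + 1) * (int n - int k))"
      unfolding b X_def by (simp add: algebra_simps)
    finally show ?thesis .
  qed
  have Y1: "(fact (2 * Suc k) :: int) = Y * ((2*int k+1) * (2*int k + 2))"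
    unfolding Y_def by (simp add: fact_Suc algebra_simps)
  have "X * ((-4) * (int k + 1) * (int n - int k)) - Y * ((2*int k+1) * (2*int k + 2))
      = (X - Y) * ((-4) * (int k + 1) * (int n - int k)) - Y * (2 * (int k + 1)) * int (2*n+1)"
    by (simp add: algebra_simps)
  moreover have "int (2*n+1) dvd \<dots>" using IH by simp
  ultimately show ?case using X1 Y1 by simp
qed

lemma central_cong:
  fixes n k :: nat
  assumes p: "prime (2*n+1)" and k: "k < 2*n+1"
  shows "int (2*n+1) dvd int ((2*k) choose k) - (-4)^k * int (n choose k)"
proof (cases "k \<le> n")
  case True
  have "int (2*n+1) dvd (-4)^k * fact k * fact k * int (n choose k) - fact (2*k)"
    using central_aux[OF True] .
  moreover have "(fact (2*k) :: int) = fact k * fact k * int ((2*k) choose k)"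
    using binomial_fact_lemma[of k "2*k"] by (metis mult_2 add_diff_cancel_left' le_add1 of_nat_fact of_nat_mult)
  ultimately have "int (2*n+1) dvd (fact k * fact k) * ((-4)^k * int (n choose k) - int ((2*k) choose k))"
    by (simp add: algebra_simps)
  moreover have "\<not> int (2*n+1) dvd fact k * fact k"
  proof
    assume "int (2*n+1) dvd fact k * fact k"
    then have "(2*n+1) dvd fact k * fact k"
      by (metis of_nat_dvd_iff of_nat_fact of_nat_mult)
    then have "(2*n+1) dvd fact k" using p prime_dvd_mult_iff by blast
    then show False using prime_dvd_fact_iff[OF p] True by simp
  qed
  moreover have "prime (int (2*n+1))" using prime_nat_int_transfer[of "2*n+1"] p by blast
  ultimately have "int (2*n+1) dvd ((-4)^k * int (n choose k) - int ((2*k) choose k))"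
    using prime_dvd_mult_iff by blast
  then show ?thesis by (metis dvd_minus_iff minus_diff_eq)
next
  case False
  have nk: "n choose k = 0" using False by simp
  have "(fact (2*k) :: nat) = fact k * fact k * ((2*k) choose k)"
    using binomial_fact_lemma[of k "2*k"] by (simp add: mult_2)
  moreover have "(2*n+1) dvd fact (2*k)" using prime_dvd_fact_iff[OF p] False by simp
  moreover have "\<not> (2*n+1) dvd fact k" using prime_dvd_fact_iff[OF p] k by simp
  ultimately have "(2*n+1) dvd ((2*k) choose k)" using p prime_dvd_mult_iff by metis
  then have "int (2*n+1) dvd int ((2*k) choose k)" by (subst int_dvd_int_iff)
  moreover have "int (n choose k) = 0" using nk by simp
  ultimately show ?thesis by (metis diff_zero mult_zero_right)
qed

lemma binom_pm1:
  fixes p m :: nat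
  assumes p: "prime p" and m: "m < p"
  shows "int p dvd int ((p - 1) choose m) - (-1)^m"
  using m
proof (induction m)
  case 0 then show ?case by simp
next
  case (Suc m)
  have IH: "int p dvd int ((p - 1) choose m) - (-1)^m" using Suc by simp
  have b: "int (Suc m) * int ((p-1) choose Suc m) = (int p - 1 - int m) * int ((p-1) choose m)"
  proof -
    have "Suc m * ((p-1) choose Suc m) = (p - 1 - m) * ((p-1) choose m)" using binom_step[of m "p-1"] .
    then have "int (Suc m * ((p-1) choose Suc m)) = int ((p - 1 - m) * ((p-1) choose m))" by simp
    then show ?thesis using Suc.prems by (simp only: of_nat_mult of_nat_diff) (simp add: of_nat_diff)
  qed
  have "int (Suc m) * (int ((p - 1) choose Suc m) - (-1)^Suc m)
      = int p * int ((p-1) choose m) - int (Suc m) * (int ((p-1) choose m) - (-1)^m)"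
    using b by (simp add: algebra_simps)
  moreover have "int p dvd \<dots>" using IH by simp
  ultimately have "int p dvd int (Suc m) * (int ((p - 1) choose Suc m) - (-1)^Suc m)" by simp
  moreover have "\<not> int p dvd int (Suc m)"
  proof -
    have "\<not> p dvd Suc m" using Suc.prems by (auto dest: dvd_imp_le)
    then show ?thesis by (subst int_dvd_int_iff)
  qed
  moreover have "prime (int p)" using p by simp
  ultimately show ?case using prime_dvd_mult_iff by blast
qed

lemma sum_binom_from1:
  "(\<Sum>k=1..N. of_nat (N choose k) * (x::rat)^k) = (1 + x)^N - 1"
proof -
  have "(1 + x)^N = (x + 1)^N" by (simp add: add.commute)
  also have "\<dots> = (\<Sum>k\<le>N. of_nat (N choose k) * x^k)"
    by (simp add: binomial_ring)
  also have "{..N} = insert 0 {1..N}" by auto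
  also have "(\<Sum>k\<in>insert 0 {1..N}. of_nat (N choose k) * x^k) = 1 + (\<Sum>k=1..N. of_nat (N choose k) * x^k)"
    by (subst sum.insert) auto
  finally show ?thesis by simp
qed

lemma term_split:
  assumes "k \<in> {1..Suc m}"
  shows "of_nat (Suc m choose k) * (x::rat)^k / of_nat k
       = of_nat (m choose k) * x^k / of_nat k + of_nat (Suc m choose k) * x^k / of_nat (Suc m)"
proof -
  obtain j where j: "k = Suc j" using assms by (cases k) auto
  have e: "real_of_nat 0 = 0" by simp
  have a: "Suc j * (Suc m choose Suc j) = Suc m * (m choose j)" by (rule Suc_times_binomial)
  have "(of_nat (Suc m choose Suc j) :: rat) = of_nat (m choose Suc j) + of_nat (m choose j)" by simp
  moreover have "(of_nat (m choose j) :: rat) / of_nat (Suc j) = of_nat (Suc m choose Suc j) / of_nat (Suc m)"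
  proof -
    have "(of_nat (Suc j) :: rat) * of_nat (Suc m choose Suc j) = of_nat (Suc m) * of_nat (m choose j)"
      using a by (metis of_nat_mult)
    then show ?thesis by (simp add: field_simps del: of_nat_Suc)
  qed
  ultimately have "(of_nat (Suc m choose Suc j) :: rat) / of_nat (Suc j)
     = of_nat (m choose Suc j) / of_nat (Suc j) + of_nat (Suc m choose Suc j) / of_nat (Suc m)"
    by (simp add: add_divide_distrib del: of_nat_Suc)
  then have "(of_nat (Suc m choose Suc j) :: rat) / of_nat (Suc j) * x^k
     = (of_nat (m choose Suc j) / of_nat (Suc j) + of_nat (Suc m choose Suc j) / of_nat (Suc m)) * x^k"
    by simp
  then show ?thesis unfolding j by (simp add: algebra_simps del: of_nat_Suc)
qed

lemma log_identity:
  "(\<Sum>k=1..m. of_nat (m choose k) * (x::rat)^k / of_nat k) = (\<Sum>j=1..m. ((1+x)^j - 1)/of_nat j)"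
proof (induction m)
  case 0 then show ?case by simp
next
  case (Suc m)
  have "(\<Sum>k=1..Suc m. of_nat (Suc m choose k) * x^k / of_nat k)
      = (\<Sum>k=1..Suc m. of_nat (m choose k) * x^k / of_nat k)
        + (\<Sum>k=1..Suc m. of_nat (Suc m choose k) * x^k / of_nat (Suc m))"
    by (subst sum.distrib[symmetric]) (rule sum.cong[OF refl term_split])
  also have "(\<Sum>k=1..Suc m. of_nat (m choose k) * x^k / of_nat k) = (\<Sum>k=1..m. of_nat (m choose k) * x^k / of_nat k)"
    by simp
  also have "(\<Sum>k=1..Suc m. of_nat (Suc m choose k) * x^k / of_nat (Suc m)) = ((1+x)^Suc m - 1) / of_nat (Suc m)"
    by (simp only: sum_divide_distrib[symmetric] sum_binom_from1)
  finally show ?case using Suc.IH by simp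
qed

lemma even_extract:
  "(\<Sum>k\<le>(m::nat). (if even k then f k else 0)) = (\<Sum>j\<le>m div 2. f (2*j) :: 'a::comm_monoid_add)"
proof (induction m)
  case 0 then show ?case by simp
next
  case (Suc m)
  show ?case
  proof (cases "even (Suc m)")
    case True
    then have "Suc m div 2 = Suc (m div 2)" by presburger
    moreover have "2 * Suc (m div 2) = Suc m" using True by presburger
    ultimately show ?thesis using Suc True by (simp add: add.commute)
  next
    case False
    then have "Suc m div 2 = m div 2" by presburger
    then show ?thesis using Suc False by simp
  qed
qed

lemma plus_minus_binom:
  "(1 + t)^m + (1 - t)^m = 2 * (\<Sum>j\<le>m div 2. of_nat (m choose (2*j)) * t^(2*j) :: 'a::comm_ring_1)"
proof -
  have "(1 + t)^m = (\<Sum>k\<le>m. of_nat (m choose k) * t^k)"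
    using binomial_ring[of t 1 m] by (simp add: add.commute)
  moreover have "(1 - t)^m = (\<Sum>k\<le>m. of_nat (m choose k) * (-t)^k)"
    using binomial_ring[of "-t" 1 m] by (simp add: add.commute)
  moreover have pt: "\<And>k. of_nat (m choose k) * t ^ k + of_nat (m choose k) * ((- t) ^ k)
     = (if even k then 2 * (of_nat (m choose k) * t^k) else (0::'a))"
  proof -
    fix k
    show "of_nat (m choose k) * t ^ k + of_nat (m choose k) * ((- t) ^ k)
     = (if even k then 2 * (of_nat (m choose k) * t^k) else (0::'a))"
    proof (cases "even k")
      case True
      then have "(- t) ^ k = t ^ k" proof -
        obtain j where "k = 2*j" using True by (rule evenE)
        then show ?thesis by (simp only: Power.power_minus_even)
      qed
      then show ?thesis using True by (simp only: if_True mult_2 distrib_right)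
    next
      case False
      then have "(- t) ^ k = - (t ^ k)" proof -
        obtain j where "k = 2*j + 1" using False by (rule oddE)
        then have "k = Suc (2*j)" by simp
        then show ?thesis by (simp only: power_Suc Power.power_minus_even mult_minus_left)
      qed
      then show ?thesis using False by (simp only: if_False mult_minus_right right_minus)
    qed
  qed
  ultimately have "(1 + t)^m + (1 - t)^m = (\<Sum>k\<le>m. (if even k then 2 * (of_nat (m choose k) * t^k) else 0))"
    by (simp only: sum.distrib[symmetric] pt)
  also have "\<dots> = (\<Sum>j\<le>m div 2. 2 * (of_nat (m choose (2*j)) * t^(2*j)))"
    by (rule even_extract)
  finally show ?thesis by (simp add: sum_distrib_left)
qed

lemma pow_facts:
  fixes s :: complex
  assumes s: "s^2 = -1/3"
  shows "(1+s)^6 = -64/27" "(1+s)^5 = 16/9*s - 16/9"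
proof -
  have h2: "(1+s)^2 = 2/3 + 2*s"
  proof -
    have "(1+s)^2 = 1 + 2*s + s^2" by (simp add: power2_eq_square algebra_simps)
    then show ?thesis using s by simp
  qed
  have h4: "(1+s)^4 = -8/9 + 8/3*s"
  proof -
    have "(1+s)^4 = ((1+s)^2)^2" by (simp flip: power_mult)
    also have "\<dots> = 4/9 + 8/3*s + 4*s^2" unfolding h2 by (simp add: power2_eq_square algebra_simps)
    finally show ?thesis using s by simp
  qed
  have "(1+s)^6 = (1+s)^4 * (1+s)^2" by (simp flip: power_add)
  also have "\<dots> = -16/27 + 16/3 * s^2" unfolding h4 h2 by (simp add: power2_eq_square algebra_simps)
  finally show "(1+s)^6 = -64/27" using s by simp
  have "(1+s)^5 = (1+s)^4 * (1+s)" by (simp flip: power_Suc2)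
  also have "\<dots> = -8/9 + 16/9*s + 8/3*s^2" unfolding h4 by (simp add: power2_eq_square field_simps)
  finally show "(1+s)^5 = 16/9*s - 16/9" using s by simp
qed

lemma Q_value:
  fixes p :: nat
  assumes p: "prime p" "p > 3"
  shows "\<exists>\<sigma>::int. (\<sigma> = 1 \<or> \<sigma> = -1) \<and>
     (\<Sum>j\<le>(p-1) div 2. of_nat (p choose (2*j)) * (-1/3::rat)^j) * 3^((p-1) div 2) = of_int \<sigma> * 2^(p-1)"
proof -
  define t :: complex where "t = \<i> * of_real (sqrt 3) / 3"
  have t2: "t^2 = -1/3"
  proof -
    have "t^2 = \<i>^2 * (of_real (sqrt 3))^2 / 9" unfolding t_def by (simp add: power_divide power_mult_distrib)
    also have "(of_real (sqrt 3) :: complex)^2 = 3" by (simp flip: of_real_power)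
    finally show ?thesis by simp
  qed
  have mt2: "(-t)^2 = -1/3" using t2 by simp
  define Q where "Q = (\<Sum>j\<le>(p-1) div 2. of_nat (p choose (2*j)) * (-1/3::rat)^j)"
  have oddp: "odd p" using p prime_odd_nat by auto
  have pdiv: "p div 2 = (p-1) div 2" using oddp by presburger
  have QC: "(1+t)^p + (1-t)^p = 2 * of_rat Q"
  proof -
    have "(1+t)^p + (1-t)^p = 2 * (\<Sum>j\<le>p div 2. of_nat (p choose (2*j)) * t^(2*j))"
      by (rule plus_minus_binom)
    also have "(\<Sum>j\<le>p div 2. of_nat (p choose (2*j)) * t^(2*j)) = of_rat Q"
      unfolding Q_def pdiv by (simp add: of_rat_sum of_rat_mult of_rat_power power_mult t2 of_rat_divide of_rat_minus)
    finally show ?thesis .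
  qed
  have "p mod 6 = 1 \<or> p mod 6 = 5"
  proof -
    have "\<not> 3 dvd p"
    proof
      assume "3 dvd p"
      with p(1) have "(3::nat) = 1 \<or> 3 = p" unfolding prime_nat_iff by blast
      then show False using p(2) by simp
    qed
    then show ?thesis using oddp by presburger
  qed
  then show ?thesis
  proof
    assume m: "p mod 6 = 1"
    define a where "a = p div 6"
    have pa: "p = 6*a + 1" using m unfolding a_def by presburger
    have "(1+t)^p + (1-t)^p = (-64/27)^a * 2"
    proof -
      have "(1+t)^p = ((1+t)^6)^a * (1+t)" unfolding pa by (simp add: power_add power_mult)
      moreover have "(1-t)^p = ((1+(-t))^6)^a * (1+(-t))" unfolding pa by (simp add: power_add power_mult)
      ultimately show ?thesis using pow_facts(1)[OF t2] pow_facts(1)[OF mt2] by (simp add: algebra_simps)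
    qed
    then have "of_rat Q = (of_rat ((-64/27)^a) :: complex)" using QC by (simp add: of_rat_power of_rat_divide of_rat_minus)
    then have Qv: "Q = (-64/27)^a" by simp
    have n: "(p-1) div 2 = 3*a" using pa by simp
    have "Q * 3^((p-1) div 2) = (-64/27)^a * 27^a"
      unfolding Qv n by (simp add: power_mult)
    also have "\<dots> = (-64/27 * 27)^a" by (simp only: power_mult_distrib)
    also have "\<dots> = (-1)^a * 64^a" by (simp flip: power_mult_distrib)
    also have "(64::rat)^a = 2^(p-1)" unfolding pa by (simp add: power_mult)
    finally have "Q * 3^((p-1) div 2) = of_int ((-1)^a) * 2^(p-1)" by simp
    moreover have "(-1::int)^a = 1 \<or> (-1::int)^a = -1" by (cases "even a") simp_all
    ultimately show ?thesis unfolding Q_def by blast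
  next
    assume m: "p mod 6 = 5"
    define a where "a = p div 6"
    have pa: "p = 6*a + 5" using m unfolding a_def by presburger
    have "(1+t)^p + (1-t)^p = 2 * ((-64/27)^a * (-16/9))"
    proof -
      have "(1+t)^p = ((1+t)^6)^a * (1+t)^5" unfolding pa by (simp add: power_add power_mult)
      then have e1: "(1+t)^p = (-64/27)^a * (16/9*t - 16/9)" by (simp only: pow_facts[OF t2])
      have "(1-t)^p = ((1+(-t))^6)^a * (1+(-t))^5" unfolding pa by (simp add: power_add power_mult)
      then have e2: "(1-t)^p = (-64/27)^a * (16/9*(-t) - 16/9)" by (simp only: pow_facts[OF mt2])
      show ?thesis unfolding e1 e2 by (simp add: algebra_simps)
    qed
    then have h: "2 * of_rat Q = 2 * ((-64/27)^a * (-16/9) :: complex)" using QC by metis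
    have "of_rat Q = ((-64/27)^a * (-16/9) :: complex)"
      using mult_left_cancel[of "2::complex" "of_rat Q" "(-64/27)^a * (-16/9)"] h by (metis zero_neq_numeral)
    then have "of_rat Q = (of_rat ((-64/27)^a * (-16/9)) :: complex)" by (simp add: of_rat_power of_rat_divide of_rat_mult of_rat_minus)
    then have Qv: "Q = (-64/27)^a * (-16/9)" by (simp only: of_rat_eq_iff)
    have n: "(p-1) div 2 = 3*a + 2" using pa by simp
    have "Q * 3^((p-1) div 2) = (-64/27)^a * 27^a * (-16/9*9)"
      unfolding Qv n by (simp add: power_mult power_add)
    also have "(-64/27::rat)^a * 27^a = (-64/27 * 27)^a" by (simp only: power_mult_distrib)
    also have "\<dots> = (-1)^a * 64^a" by (simp flip: power_mult_distrib)
    also have "(64::rat)^a = 2^(6*a)" by (simp add: power_mult)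
    also have "(-1)^a * 2^(6*a) * (-16/9*9) = (-1::rat)^(a+1) * 2^(6*a+4)" by (simp add: power_add)
    also have "6*a+4 = p-1" using pa by simp
    finally have "Q * 3^((p-1) div 2) = of_int ((-1)^(a+1)) * 2^(p-1)" by simp
    moreover have "(-1::int)^(a+1) = 1 \<or> (-1::int)^(a+1) = -1" by (cases "even (a+1)") simp_all
    ultimately show ?thesis unfolding Q_def by blast
  qed
qed

lemma pc_term:
  assumes "P dvd a - b" "d \<noteq> 0" "coprime d P"
  shows "pc P (of_int a / of_int d) (of_int b / of_int d)"
proof -
  have "pint P (of_int 1 / of_int d)" using assms by (intro pint_frac) auto
  from pc_mult[OF this pc_int[OF assms(1)]] show ?thesis by simp
qed

lemma fermat_int:
  assumes "prime p" "\<not> p dvd a"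
  shows "int p dvd int a ^ (p-1) - 1"
proof -
  have "[a ^ (p - 1) = 1] (mod p)" using fermat_theorem assms by blast
  then have "[int (a ^ (p-1)) = int 1] (mod int p)" using cong_int_iff by blast
  then show ?thesis by (simp add: cong_iff_dvd_diff)
qed

lemma coprime_small:
  assumes "prime p" "0 < k" "k < p"
  shows "coprime (int k) (int p)"
proof -
  have "\<not> p dvd k" using assms by (auto dest: dvd_imp_le)
  then have "coprime p k" using prime_imp_coprime assms(1) by blast
  then show ?thesis by (simp add: coprime_commute)
qed

lemma step1:
  fixes p n k :: nat
  assumes p: "prime p" "p > 3" and pn: "p = 2*n+1" and k: "1 \<le> k" "k \<le> p - 1"
  shows "pc (int p) (of_nat ((2*k) choose k) / (of_nat k * 3^k))
                    (of_nat (n choose k) * (-4/3)^k / of_nat k)"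
proof -
  have d: "int p dvd int ((2*k) choose k) - (-4)^k * int (n choose k)"
    using central_cong[of n k] p pn k by simp
  have ck: "coprime (int k) (int p)" using coprime_small[of p k] p k by simp
  have c3: "coprime (3::int) (int p)" using coprime_small[of p 3] p by simp
  have cd: "coprime (int k * 3^k) (int p)" using ck c3 by simp
  have nz: "int k * 3^k \<noteq> 0" using k by simp
  have e1: "(of_nat ((2*k) choose k) / (of_nat k * 3^k) :: rat) = of_int (int ((2*k) choose k)) / of_int (int k * 3^k)"
    by simp
  have e2: "(of_nat (n choose k) * (-4/3)^k / of_nat k :: rat) = of_int ((-4)^k * int (n choose k)) / of_int (int k * 3^k)"
    unfolding power_divide[of "-4::rat" 3 k] by (simp add: field_simps)
  show ?thesis unfolding e1 e2 by (rule pc_term[OF d nz cd])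
qed

lemma step4:
  fixes p j :: nat and y :: rat
  assumes p: "prime p" and j: "1 \<le> j" "2*j < p" and y: "pint (int p) y"
  shows "pc (int p) (y / of_nat j) (- (2 / of_nat p) * of_nat (p choose (2*j)) * y)"
proof -
  define C' where "C' = (p-1) choose (2*j-1)"
  have a: "2*j * (p choose (2*j)) = p * C'"
    unfolding C'_def using times_binomial_minus1_eq[of "2*j" p] j by simp
  have "int p dvd int C' - (-1)^(2*j-1)" unfolding C'_def using binom_pm1[of p "2*j-1"] p j by simp
  moreover have "(-1::int)^(2*j-1) = -1" using j by (simp add: neg_one_odd_power)
  ultimately have "int p dvd int C' + 1" by simp
  then obtain e where e: "int C' + 1 = int p * e" by blast
  have p0: "(of_nat p :: rat) \<noteq> 0" using p by (simp add: prime_gt_0_nat)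
  have j0: "(of_nat j :: rat) \<noteq> 0" using j by simp
  have ar: "2 * of_nat j * of_nat (p choose (2*j)) = (of_nat p * of_nat C' :: rat)"
    using a by (metis of_nat_mult of_nat_numeral)
  have er: "of_nat C' + 1 = (of_nat p * of_int e :: rat)"
    using e by (metis of_int_add of_int_mult of_int_of_nat_eq of_int_1)
  have key: "(1 / of_nat j - (- (2 / of_nat p) * of_nat (p choose (2*j)))) / of_int (int p)
        = (of_int e / of_int (int j) :: rat)"
  proof -
    have "(1 / of_nat j - (- (2 / of_nat p) * of_nat (p choose (2*j)))) / of_int (int p)
        = (of_nat p + 2 * of_nat j * of_nat (p choose (2*j))) / (of_nat p * of_nat p * of_nat j :: rat)"
      using p0 j0 by (simp add: field_simps)
    also have "\<dots> = (of_nat p * (of_nat C' + 1)) / (of_nat p * of_nat p * of_nat j)"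
      unfolding ar by (simp add: algebra_simps)
    also have "\<dots> = of_int e / of_nat j" unfolding er using p0 j0 by (simp add: field_simps)
    finally show ?thesis by simp
  qed
  have "pc (int p) (1 / of_nat j) (- (2 / of_nat p) * of_nat (p choose (2*j)))"
    unfolding pc_def key using j coprime_small[of p j] p by (intro pint_frac) auto
  from pc_mult[OF y this] show ?thesis by (simp add: algebra_simps)
qed

theorem lemma2p4:
  fixes p :: nat
  assumes "prime p" and "p > 3"
  shows "rat_cong (\<Sum>k=1..p-1. of_nat ((2*k) choose k) / (of_nat k * 3 ^ k))
                  ((3 ^ (p - 1) - 1) / of_nat p) (int p)"
proof -
  note p = assms
  define n where "n = (p-1) div 2"
  have oddp: "odd p" using p prime_odd_nat by auto
  have pn: "p = 2*n+1" unfolding n_def using oddp by presburger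
  have pdiv: "p div 2 = n" using pn by simp
  have primeP: "prime (int p)" using p by simp
  have p0: "(of_nat p :: rat) \<noteq> 0" using p by (simp add: prime_gt_0_nat)
  define S where "S = (\<Sum>k=1..p-1. of_nat ((2*k) choose k) / (of_nat k * 3 ^ k) :: rat)"
  define S1 where "S1 = (\<Sum>k=1..p-1. of_nat (n choose k) * (-4/3::rat)^k / of_nat k)"
  have c1: "pc (int p) S S1"
    unfolding S_def S1_def by (rule pc_sum) (use step1[OF p pn] in auto)
  define T where "T = (\<Sum>j=1..n. ((-1/3::rat)^j - 1) / of_nat j)"
  have S1T: "S1 = T"
  proof -
    have "S1 = (\<Sum>k=1..n. of_nat (n choose k) * (-4/3::rat)^k / of_nat k)"
      unfolding S1_def by (rule sum.mono_neutral_right) (auto simp: pn)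
    also have "\<dots> = (\<Sum>j=1..n. ((1 + (-4/3::rat))^j - 1) / of_nat j)" by (rule log_identity)
    also have "(1 + (-4/3::rat)) = -1/3" by simp
    finally show ?thesis unfolding T_def .
  qed
  define X where "X = (\<Sum>j=1..n. - (2 / of_nat p) * of_nat (p choose (2*j)) * ((-1/3::rat)^j - 1))"
  have py: "\<And>j. pint (int p) ((-1/3::rat)^j - 1)"
  proof -
    fix j :: nat
    have "pint (int p) (of_int (-1) / of_int 3)" using coprime_small[of p 3] p by (intro pint_frac) auto
    then have "pint (int p) ((-1/3::rat)^j)" by (simp add: pint_pow)
    then show "pint (int p) ((-1/3::rat)^j - 1)" using pint_int[of "int p" 1] pint_diff by fastforce
  qed
  have c2: "pc (int p) T X"
    unfolding T_def X_def by (rule pc_sum) (use step4[OF p(1) _ _ py] pn in auto)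
  define Q where "Q = (\<Sum>j\<le>n. of_nat (p choose (2*j)) * (-1/3::rat)^j)"
  have B: "(\<Sum>j\<le>n. of_nat (p choose (2*j)) :: rat) = 2^(p-1)"
  proof -
    have "(1 + 1)^p + (1 - 1)^p = 2 * (\<Sum>j\<le>p div 2. of_nat (p choose (2*j)) * (1::rat)^(2*j))"
      by (rule plus_minus_binom)
    then have "2 * 2^(p-1) = 2 * (\<Sum>j\<le>n. of_nat (p choose (2*j)) :: rat)"
      using pn by (simp add: pdiv)
    then show ?thesis by simp
  qed
  have XQ: "X = - (2 / of_nat p) * (Q - 2^(p-1))"
  proof -
    have "X = - (2 / of_nat p) * (\<Sum>j=1..n. of_nat (p choose (2*j)) * ((-1/3::rat)^j - 1))"
      unfolding X_def by (simp add: sum_distrib_left mult.assoc)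
    also have "(\<Sum>j=1..n. of_nat (p choose (2*j)) * ((-1/3::rat)^j - 1))
             = (\<Sum>j\<le>n. of_nat (p choose (2*j)) * ((-1/3::rat)^j - 1))"
      by (rule sum.mono_neutral_left) (auto simp: Suc_le_eq)
    also have "\<dots> = Q - (\<Sum>j\<le>n. of_nat (p choose (2*j)))"
      unfolding Q_def by (simp add: right_diff_distrib sum_subtractf)
    finally show ?thesis unfolding B .
  qed
  obtain \<sigma> :: int where sg: "\<sigma> = 1 \<or> \<sigma> = -1" and Qs: "Q * 3^n = of_int \<sigma> * 2^(p-1)"
    using Q_value[OF p] unfolding Q_def n_def by blast
  have s2: "\<sigma> * \<sigma> = 1" using sg by auto
  have Q1: "pc (int p) Q 1"
  proof -
    have "Q = 1 + (\<Sum>j=1..n. of_nat (p choose (2*j)) * (-1/3::rat)^j)"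
    proof -
      have "{..n} = insert 0 {1..n}" by auto
      then show ?thesis unfolding Q_def by (simp add: sum.insert)
    qed
    moreover have "pc (int p) (\<Sum>j=1..n. of_nat (p choose (2*j)) * (-1/3::rat)^j) (\<Sum>j=1..n. 0)"
    proof (rule pc_sum)
      fix j assume j: "j \<in> {1..n}"
      have "p dvd p choose (2*j)" using dvd_choose_prime[of "2*j" p] j pn p by auto
      then have "int p dvd int (p choose (2*j)) - 0" by (simp add: int_dvd_int_iff flip: of_nat_dvd_iff)
      from pc_mult[OF pint_pow[OF _] pc_int[OF this], of "-1/3" j]
      show "pc (int p) (of_nat (p choose (2*j)) * (-1/3::rat)^j) 0"
        using coprime_small[of p 3] p by (auto intro!: pint_frac[of 3 "int p" "-1", simplified] simp: mult.commute)
    qed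
    ultimately show ?thesis using pc_add[OF pc_refl[of "int p" 1]] by fastforce
  qed
  have "pc (int p) (3^n * Q) (3^n * 1)"
    using pc_mult[OF _ Q1] pint_pow pint_int[of "int p" 3] by (metis of_int_numeral)
  then have "pc (int p) (of_int (\<sigma> * 2^(p-1))) (of_int (3^n))" using Qs by (simp add: mult.commute)
  then have d1: "int p dvd \<sigma> * 2^(p-1) - 3^n" by (rule pc_to_int[OF primeP])
  have n2: "\<not> p dvd 2" using p dvd_imp_le[of p 2] by auto
  have n3: "\<not> p dvd 3" using p dvd_imp_le[of p 3] by auto
  have f2: "int p dvd 2^(p-1) - 1" using fermat_int[OF p(1) n2] by simp
  have f3: "int p dvd 3^(p-1) - 1" using fermat_int[OF p(1) n3] by simp
  have "3^n - \<sigma> = \<sigma> * (2^(p-1) - 1) - (\<sigma> * 2^(p-1) - 3^n)" by (simp add: algebra_simps)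
  then have "int p dvd 3^n - \<sigma>" using d1 f2 by (metis dvd_diff dvd_mult)
  then obtain d where d: "3^n - \<sigma> = int p * d" by blast
  have dr: "(3::rat)^n - of_int \<sigma> = of_nat p * of_int d"
    using d by (metis of_int_diff of_int_mult of_int_of_nat_eq of_int_numeral of_int_power)
  have A0: "(3::rat)^n \<noteq> 0" by simp
  have Xv: "X = of_int (2^p * d) / of_int (3^n)"
  proof -
    have Qv: "Q = of_int \<sigma> * 2^(p-1) / 3^n" using Qs A0 by (simp add: field_simps)
    have "X = 2 / of_nat p * 2^(p-1) * (3^n - of_int \<sigma>) / 3^n"
      unfolding XQ Qv using A0 p0 by (simp add: field_simps)
    also have "\<dots> = 2 * 2^(p-1) * of_int d / 3^n" unfolding dr using p0 by (simp add: field_simps)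
    also have "(2::rat) * 2^(p-1) = 2^p" using p by (simp flip: power_Suc)
    finally show ?thesis by simp
  qed
  have qv: "((3 ^ (p - 1) - 1) / of_nat p :: rat) = of_int (d * (3^n + \<sigma>) * 3^n) / of_int (3^n)"
  proof -
    have "(3::rat)^(p-1) - 1 = (3^n - of_int \<sigma>) * (3^n + of_int \<sigma>)"
    proof -
      have "(3::rat)^(p-1) = 3^n * 3^n" using pn by (simp flip: power_add)
      moreover have "(of_int \<sigma> :: rat) * of_int \<sigma> = 1" using s2 by (metis of_int_mult of_int_1)
      ultimately show ?thesis by (simp add: algebra_simps)
    qed
    then have "((3 ^ (p - 1) - 1) / of_nat p :: rat) = of_int d * (3^n + of_int \<sigma>)"
      unfolding dr using p0 by (simp add: field_simps)
    then show ?thesis using A0 by simp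
  qed
  have c3: "pc (int p) X ((3 ^ (p - 1) - 1) / of_nat p)"
    unfolding Xv qv
  proof (rule pc_term)
    have "2^p - 3^n * 3^n - \<sigma> * 3^n = 2 * (2^(p-1) - 1) - (3^(p-1) - 1) - \<sigma> * (3^n - \<sigma>)"
    proof -
      have "(2::int)^p = 2 * 2^(p-1)" using p by (simp flip: power_Suc)
      moreover have "(3::int)^(p-1) = 3^n * 3^n" using pn by (simp flip: power_add)
      ultimately show ?thesis using s2 by (simp add: algebra_simps)
    qed
    then have "int p dvd 2^p - 3^n * 3^n - \<sigma> * 3^n"
      using f2 f3 \<open>int p dvd 3^n - \<sigma>\<close> by (metis dvd_diff dvd_mult)
    then have "int p dvd d * (2^p - 3^n * 3^n - \<sigma> * 3^n)" by simp
    then show "int p dvd 2^p * d - d * (3^n + \<sigma>) * 3^n" by (simp add: algebra_simps)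
    show "(3::int)^n \<noteq> 0" by simp
    show "coprime ((3::int)^n) (int p)" using coprime_small[of p 3] p by simp
  qed
  have "pc (int p) S ((3 ^ (p - 1) - 1) / of_nat p)"
    using pc_trans[OF c1 pc_trans[OF _ pc_trans[OF c2 c3]]] S1T pc_refl by metis
  then show ?thesis unfolding S_def by (rule pc_rat_cong[OF primeP])
qed

end
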